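(* Let $X$ be a $d$-uniform simplicial complex and $k\le d$. Assume there exist functions $up(t,\nu)$ and $low(t,\nu)$ such that for every $\nu>0$ every $\nu$-Lipschitz $f:X(d)\to\mathbb{R}$ satisfies $\Pr[f-\mathbb{E}[f]>t]\le up(t,\nu)$ and $\Pr[f-\mathbb{E}[f]<-t]\le low(t,\nu)$ for all $t>0$. Then every function $f':X(k)\to\mathbb{R}$ with $\nu$-bounded difference satisfies, for all $t>0$, \[\Pr[f'-\mathbb{E}[f']>t]\le up\left(\tfrac t2,\tfrac kd\nu\right)+e^{-\frac{t^2}{4\nu}},\qquad\Pr[f'-\mathbb{E}[f']<-t]\le low\left(\tfrac t2,\tfrac kd\nu\right)+e^{-\frac{t^2}{4\nu}}.\]
   Context: $X$ is a $d$-uniform simplicial complex ($X(j)$ its faces of size $j$) with a distribution $\pi_d$ on $X(d)$ inducing $\pi_j$ on $X(j)$ by uniform subsampling; probabilities on $X(j)$ are with respect to $\pi_j$. Lipschitz: order vertices of each face arbitrarily; for $x=(x_1,\dots,x_m)\sim\pi_m$ let $Z=f(x)$ and $Z'_{(i)}=f(x_1,\dots,z_i,\dots,x_m)$ with $z_i$ drawn from the vertex distribution of the link of $x\setminus\{x_i\}$ (the link of $s$ being $\{t\setminus s:s\subseteq t\in X\}$ with induced distribution); $f:X(m)\to\mathbb{R}$ is $\nu$-Lipschitz if with probability $1$, $\sum_{i=1}^m(Z-Z'_{(i)})_+^2\le\nu$ where $(z)_+=\max\{z,0\}$. The down-up walk on $X(m)$ moves from $s$ by deleting a uniform vertex and adding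 back a face containing the remainder proportionally to $\pi_m$; $f:X(m)\to\mathbb{R}$ has $\nu$-bounded difference if $(f(s)-f(s'))^2\le\frac{\nu}{m}$ for every $s\in X(m)$ and every neighbor $s'$ of $s$ in this walk. *)

theory Defs
  imports "HOL-Probability.Probability"
begin

text \<open>A d-uniform simplicial complex is given by a distribution pd on its top faces
  (sets of vertices); the complex is the downward closure of the support of pd.
  X(j) is the support of the induced distribution pi_j below.\<close>

definition d_uniform :: "'v set pmf \<Rightarrow> nat \<Rightarrow> bool" where
  "d_uniform pd d \<longleftrightarrow> (\<forall>t \<in> set_pmf pd. finite t \<and> card t = d)"

definition face_pmf :: "'v set pmf \<Rightarrow> nat \<Rightarrow> 'v set pmf" where
  "face_pmf pd j = bind_pmf pd (\<lambda>t. pmf_of_set {u. u \<subseteq> t \<and> card u = j})"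

definition link_vertex_pmf :: "'v set pmf \<Rightarrow> 'v set \<Rightarrow> 'v pmf" where
  "link_vertex_pmf pd s =
     map_pmf (\<lambda>t. the_elem (t - s)) (cond_pmf (face_pmf pd (Suc (card s))) {t. s \<subseteq> t})"

text \<open>nu-Lipschitz (the "with probability 1" condition over x ~ pi_m and the independent
  resamplings z_i from the links of x - {x_i}).\<close>
definition lipschitz_cx :: "'v set pmf \<Rightarrow> nat \<Rightarrow> real \<Rightarrow> ('v set \<Rightarrow> real) \<Rightarrow> bool" where
  "lipschitz_cx pd m \<nu> f \<longleftrightarrow>
     (\<forall>x \<in> set_pmf (face_pmf pd m). \<forall>z :: 'v \<Rightarrow> 'v.
        (\<forall>v \<in> x. z v \<in> set_pmf (link_vertex_pmf pd (x - {v}))) \<longrightarrow>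
        (\<Sum>v\<in>x. (max (f x - f (insert (z v) (x - {v}))) 0)\<^sup>2) \<le> \<nu>)"

definition down_up_step :: "'v set pmf \<Rightarrow> nat \<Rightarrow> 'v set \<Rightarrow> 'v set pmf" where
  "down_up_step pd m s =
     bind_pmf (pmf_of_set s) (\<lambda>v. cond_pmf (face_pmf pd m) {t. s - {v} \<subseteq> t})"

definition bounded_difference :: "'v set pmf \<Rightarrow> nat \<Rightarrow> real \<Rightarrow> ('v set \<Rightarrow> real) \<Rightarrow> bool" where
  "bounded_difference pd m \<nu> f \<longleftrightarrow>
     (\<forall>s \<in> set_pmf (face_pmf pd m). \<forall>s' \<in> set_pmf (down_up_step pd m s).
        (f s - f s')\<^sup>2 \<le> \<nu> / real m)"

end

theory Submission imports Defs "HOL-Probability.Hoeffding" begin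

definition ksub :: "'a set \<Rightarrow> nat \<Rightarrow> 'a set set" where
  "ksub S k = {T. T \<subseteq> S \<and> card T = k}"

definition avg :: "'b set \<Rightarrow> ('b \<Rightarrow> real) \<Rightarrow> real" where
  "avg A g = sum g A / real (card A)"

lemma ksub_finite[simp]: "finite S \<Longrightarrow> finite (ksub S k)"
  unfolding ksub_def by (rule finite_subset[of _ "Pow S"]) auto

lemma ksub_card: "finite S \<Longrightarrow> card (ksub S k) = card S choose k"
  unfolding ksub_def by (rule n_subsets)

lemma ksub_ne: "finite S \<Longrightarrow> k \<le> card S \<Longrightarrow> ksub S k \<noteq> {}"
  using ksub_card[of S k] by (auto simp: zero_less_binomial_iff)

lemma ksub_mem_finite: "finite S \<Longrightarrow> T \<in> ksub S k \<Longrightarrow> finite T"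
  unfolding ksub_def using finite_subset by auto

lemma avg_mono: "(\<And>x. x \<in> A \<Longrightarrow> f x \<le> g x) \<Longrightarrow> avg A f \<le> avg A g"
  unfolding avg_def by (intro divide_right_mono sum_mono) auto

lemma avg_cmult: "avg A (\<lambda>x. c * f x) = c * avg A f"
  unfolding avg_def by (simp add: sum_distrib_left)

lemma avg_const: "finite A \<Longrightarrow> A \<noteq> {} \<Longrightarrow> avg A (\<lambda>x. c) = c"
  unfolding avg_def by simp

lemma avg_diff: "avg A (\<lambda>x. f x - g x) = avg A f - avg A g"
  unfolding avg_def by (simp add: sum_subtractf diff_divide_distrib)

lemma double_count:
  assumes S: "finite S"
  shows "(\<Sum>T\<in>ksub S (Suc k). \<phi> T) * real (Suc k) =
         (\<Sum>x\<in>S. \<Sum>T'\<in>ksub (S - {x}) k. \<phi> (insert x T'))"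
proof -
  have inner: "(\<Sum>T'\<in>ksub (S - {x}) k. \<phi> (insert x T')) =
      (\<Sum>T\<in>{T. T \<in> ksub S (Suc k) \<and> x \<in> T}. \<phi> T)" if x: "x \<in> S" for x
  proof (rule sum.reindex_bij_witness[where j = "insert x" and i = "\<lambda>T. T - {x}"])
    fix T' assume "T' \<in> ksub (S - {x}) k"
    then show "insert x T' - {x} = T'" "insert x T' \<in> {T. T \<in> ksub S (Suc k) \<and> x \<in> T}"
      using x S by (auto simp: ksub_def card_insert_if finite_subset)
  next
    fix T assume T: "T \<in> {T. T \<in> ksub S (Suc k) \<and> x \<in> T}"
    then show "insert x (T - {x}) = T" by auto
    have "finite T" using T S by (auto simp: ksub_def finite_subset)
    then show "T - {x} \<in> ksub (S - {x}) k" using T by (auto simp: ksub_def)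
  qed simp
  have "(\<Sum>x\<in>S. \<Sum>T'\<in>ksub (S - {x}) k. \<phi> (insert x T')) =
        (\<Sum>x\<in>S. \<Sum>T\<in>{T. T \<in> ksub S (Suc k) \<and> x \<in> T}. \<phi> T)"
    using inner by simp
  also have "\<dots> = (\<Sum>T\<in>ksub S (Suc k). \<Sum>x\<in>{x. x \<in> S \<and> x \<in> T}. \<phi> T)"
    by (rule sum.swap_restrict) (use S in auto)
  also have "\<dots> = (\<Sum>T\<in>ksub S (Suc k). \<phi> T * real (Suc k))"
  proof (rule sum.cong)
    fix T assume "T \<in> ksub S (Suc k)"
    then have "{x. x \<in> S \<and> x \<in> T} = T" "card T = Suc k" by (auto simp: ksub_def)
    then show "(\<Sum>x\<in>{x. x \<in> S \<and> x \<in> T}. \<phi> T) = \<phi> T * real (Suc k)" by simp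
  qed simp
  finally show ?thesis by (simp add: sum_distrib_right)
qed

lemma avg_split:
  assumes S: "finite S" and k: "Suc k \<le> card S"
  shows "avg (ksub S (Suc k)) \<phi> = avg S (\<lambda>x. avg (ksub (S - {x}) k) (\<lambda>T'. \<phi> (insert x T')))"
proof -
  define n where "n = card S"
  have n1: "n = Suc (n - 1)" using k n_def by auto
  have cx: "card (ksub (S - {x}) k) = (n - 1) choose k" if "x \<in> S" for x
    using that S by (simp add: ksub_card n_def)
  have "avg S (\<lambda>x. avg (ksub (S - {x}) k) (\<lambda>T'. \<phi> (insert x T'))) =
     (\<Sum>x\<in>S. (\<Sum>T'\<in>ksub (S - {x}) k. \<phi> (insert x T')) / real ((n - 1) choose k)) / real n"
    unfolding avg_def n_def[symmetric] by (intro arg_cong2[where f="(/)"] sum.cong) (auto simp: cx)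
  also have "\<dots> = (\<Sum>x\<in>S. \<Sum>T'\<in>ksub (S - {x}) k. \<phi> (insert x T')) / (real ((n - 1) choose k) * real n)"
    by (simp add: sum_divide_distrib[symmetric])
  also have "(\<Sum>x\<in>S. \<Sum>T'\<in>ksub (S - {x}) k. \<phi> (insert x T')) = (\<Sum>T\<in>ksub S (Suc k). \<phi> T) * real (Suc k)"
    by (rule double_count[OF S, symmetric])
  also have "real ((n - 1) choose k) * real n = real (n choose Suc k) * real (Suc k)"
    using Suc_times_binomial_eq[of "n - 1" k] n1 by (metis of_nat_mult mult.commute)
  also have "(\<Sum>T\<in>ksub S (Suc k). \<phi> T) * real (Suc k) / (real (n choose Suc k) * real (Suc k)) =
      avg (ksub S (Suc k)) \<phi>"
    unfolding avg_def using S by (simp add: ksub_card n_def)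
  finally show ?thesis by simp
qed


lemma hoeff_fin:
  assumes A: "finite A" "A \<noteq> {}" and hb: "\<And>x. x \<in> A \<Longrightarrow> a \<le> h x \<and> h x \<le> b" and l: "l > 0"
  shows "avg A (\<lambda>x. exp (l * (h x - avg A h))) \<le> exp (l\<^sup>2 * (b - a)\<^sup>2 / 8)"
proof -
  interpret interval_bounded_random_variable "measure_pmf (pmf_of_set A)" h a b
    by unfold_locales (use A hb in \<open>auto simp: AE_measure_pmf_iff\<close>)
  have E: "measure_pmf.expectation (pmf_of_set A) h = avg A h"
    using A by (simp add: integral_pmf_of_set avg_def)
  have "(\<integral>\<^sup>+x. exp (l * (h x - avg A h)) \<partial>measure_pmf (pmf_of_set A)) \<le> ennreal (exp (l\<^sup>2 * (b - a)\<^sup>2 / 8))"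
    using Hoeffdings_lemma_nn_integral[OF l] E by simp
  also have "(\<integral>\<^sup>+x. exp (l * (h x - avg A h)) \<partial>measure_pmf (pmf_of_set A)) =
      ennreal (measure_pmf.expectation (pmf_of_set A) (\<lambda>x. exp (l * (h x - avg A h))))"
    by (rule nn_integral_eq_integral) (use A in \<open>auto intro!: integrable_measure_pmf_finite simp: set_pmf_of_set[OF A(2,1)]\<close>)
  also have "measure_pmf.expectation (pmf_of_set A) (\<lambda>x. exp (l * (h x - avg A h))) =
      avg A (\<lambda>x. exp (l * (h x - avg A h)))"
    using A by (simp add: integral_pmf_of_set avg_def)
  finally show ?thesis by (simp add: ennreal_le_iff)
qed

definition swapb :: "('a set \<Rightarrow> real) \<Rightarrow> 'a set \<Rightarrow> nat \<Rightarrow> real \<Rightarrow> bool" where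
  "swapb g S k c \<longleftrightarrow> (\<forall>T\<in>ksub S k. \<forall>v\<in>T. \<forall>w\<in>S - T. \<bar>g T - g (insert w (T - {v}))\<bar> \<le> c)"

lemma swapb_sub:
  assumes "swapb g S (Suc k) c" "x \<in> S" "finite S"
  shows "swapb (\<lambda>T. g (insert x T)) (S - {x}) k c"
  unfolding swapb_def
proof (intro ballI)
  fix T v w assume T: "T \<in> ksub (S - {x}) k" and v: "v \<in> T" and w: "w \<in> S - {x} - T"
  have fT: "finite T" using T assms(3) by (auto simp: ksub_def finite_subset)
  have "x \<notin> T" using T by (auto simp: ksub_def)
  then have "insert x T \<in> ksub S (Suc k)" using T fT assms(2) by (auto simp: ksub_def)
  moreover have "v \<in> insert x T" "w \<in> S - insert x T" using v w by auto
  ultimately have "\<bar>g (insert x T) - g (insert w (insert x T - {v}))\<bar> \<le> c"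
    using assms(1) unfolding swapb_def by blast
  moreover have "insert w (insert x T - {v}) = insert x (insert w (T - {v}))"
    using v T by (auto simp: ksub_def)
  ultimately show "\<bar>g (insert x T) - g (insert x (insert w (T - {v})))\<bar> \<le> c" by simp
qed

lemma h_diff:
  assumes S: "finite S" and x: "x \<in> S" and y: "y \<in> S" and k: "Suc k \<le> card S"
    and sw: "swapb g S (Suc k) c" and c: "0 \<le> c"
  shows "avg (ksub (S - {x}) k) (\<lambda>T. g (insert x T)) - avg (ksub (S - {y}) k) (\<lambda>T. g (insert y T)) \<le> c"
proof (cases "x = y")
  case True then show ?thesis using c by simp
next
  case xy: False
  define A where "A = ksub (S - {x}) k"
  define B where "B = ksub (S - {y}) k"
  define \<psi> where "\<psi> T = (if y \<in> T then insert x (T - {y}) else T)" for T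
  define \<psi>' where "\<psi>' U = (if x \<in> U then insert y (U - {x}) else U)" for U
  have cA: "card A = card B" using S x y by (simp add: A_def B_def ksub_card)
  have A0: "card A > 0" using S x k by (simp add: A_def ksub_card)
  have fA: "finite A" using S by (simp add: A_def)
  have sumB: "sum (\<lambda>T. g (insert y T)) B = sum (\<lambda>T. g (insert y (\<psi> T))) A"
  proof (rule sum.reindex_bij_witness[where j = \<psi> and i = \<psi>', symmetric])
    fix T assume T: "T \<in> A"
    have fT: "finite T" using T S by (auto simp: A_def ksub_def finite_subset)
    show "\<psi>' (\<psi> T) = T" using T xy by (auto simp: \<psi>_def \<psi>'_def A_def ksub_def)
    have "y \<in> T \<Longrightarrow> card T > 0" using fT card_gt_0_iff by blast
    then show "\<psi> T \<in> B" using T xy fT x by (auto simp: \<psi>_def A_def B_def ksub_def card_insert_if)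
  next
    fix U assume U: "U \<in> B"
    have fU: "finite U" using U S by (auto simp: B_def ksub_def finite_subset)
    show "\<psi> (\<psi>' U) = U" using U xy by (auto simp: \<psi>_def \<psi>'_def B_def ksub_def)
    have "x \<in> U \<Longrightarrow> card U > 0" using fU card_gt_0_iff by blast
    then show "\<psi>' U \<in> A" using U xy fU y by (auto simp: \<psi>'_def A_def B_def ksub_def card_insert_if)
  qed simp
  have trm: "g (insert x T) - g (insert y (\<psi> T)) \<le> c" if T: "T \<in> A" for T
  proof (cases "y \<in> T")
    case True
    then have "insert y (\<psi> T) = insert x T" by (auto simp: \<psi>_def)
    then show ?thesis using c by simp
  next
    case False
    have fT: "finite T" using T S by (auto simp: A_def ksub_def finite_subset)
    have "insert x T \<in> ksub S (Suc k)" using T fT x by (auto simp: A_def ksub_def card_insert_if)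
    moreover have "x \<in> insert x T" "y \<in> S - insert x T" using False xy y by auto
    ultimately have "\<bar>g (insert x T) - g (insert y (insert x T - {x}))\<bar> \<le> c"
      using sw unfolding swapb_def by blast
    moreover have "insert y (insert x T - {x}) = insert y (\<psi> T)"
      using False T by (auto simp: \<psi>_def A_def ksub_def)
    ultimately show ?thesis by simp
  qed
  have "sum (\<lambda>T. g (insert x T)) A - sum (\<lambda>T. g (insert y T)) B =
        sum (\<lambda>T. g (insert x T) - g (insert y (\<psi> T))) A"
    by (simp add: sumB sum_subtractf)
  also have "\<dots> \<le> real (card A) * c"
    using sum_bounded_above[of A "\<lambda>T. g (insert x T) - g (insert y (\<psi> T))" c] trm by simp
  finally have "(sum (\<lambda>T. g (insert x T)) A - sum (\<lambda>T. g (insert y T)) B) / real (card A) \<le> c"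
    using A0 by (simp add: divide_le_eq mult.commute)
  then show ?thesis unfolding avg_def A_def[symmetric] B_def[symmetric] cA[symmetric]
    by (simp add: diff_divide_distrib)
qed

lemma mgf:
  assumes "finite S" "k \<le> card S" "swapb g S k c" "0 < l" "0 \<le> c"
  shows "avg (ksub S k) (\<lambda>T. exp (l * (g T - avg (ksub S k) g))) \<le> exp (real k * l\<^sup>2 * c\<^sup>2 / 8)"
  using assms
proof (induction k arbitrary: S g)
  case 0
  have "ksub S 0 = {{}}" using 0 by (auto simp: ksub_def finite_subset)
  then show ?case by (simp add: avg_def)
next
  case (Suc k)
  note S = Suc.prems(1) and k = Suc.prems(2) and sw = Suc.prems(3) and l = Suc.prems(4) and c = Suc.prems(5)
  define h where "h x = avg (ksub (S - {x}) k) (\<lambda>T. g (insert x T))" for x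
  define \<mu> where "\<mu> = avg (ksub S (Suc k)) g"
  define K where "K = exp (real k * l\<^sup>2 * c\<^sup>2 / 8)"
  have Sne: "S \<noteq> {}" using k by auto
  have \<mu>: "\<mu> = avg S h" unfolding \<mu>_def h_def by (rule avg_split[OF S k])
  have IH: "avg (ksub (S - {x}) k) (\<lambda>T. exp (l * (g (insert x T) - h x))) \<le> K" if x: "x \<in> S" for x
    unfolding h_def K_def
    by (rule Suc.IH) (use S k x l c swapb_sub[OF sw x S] in auto)
  have "avg (ksub S (Suc k)) (\<lambda>T. exp (l * (g T - \<mu>))) =
      avg S (\<lambda>x. avg (ksub (S - {x}) k) (\<lambda>T. exp (l * (g (insert x T) - \<mu>))))"
    by (rule avg_split[OF S k])
  also have "\<dots> \<le> avg S (\<lambda>x. K * exp (l * (h x - \<mu>)))"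
  proof (rule avg_mono)
    fix x assume x: "x \<in> S"
    have "avg (ksub (S - {x}) k) (\<lambda>T. exp (l * (g (insert x T) - \<mu>))) =
        avg (ksub (S - {x}) k) (\<lambda>T. exp (l * (h x - \<mu>)) * exp (l * (g (insert x T) - h x)))"
      by (simp add: mult_exp_exp algebra_simps)
    also have "\<dots> = exp (l * (h x - \<mu>)) * avg (ksub (S - {x}) k) (\<lambda>T. exp (l * (g (insert x T) - h x)))"
      by (rule avg_cmult)
    also have "\<dots> \<le> exp (l * (h x - \<mu>)) * K"
      using IH[OF x] by (intro mult_left_mono) auto
    finally show "avg (ksub (S - {x}) k) (\<lambda>T. exp (l * (g (insert x T) - \<mu>))) \<le> K * exp (l * (h x - \<mu>))"
      by (simp add: mult.commute)
  qed
  also have "\<dots> = K * avg S (\<lambda>x. exp (l * (h x - avg S h)))" by (simp add: avg_cmult \<mu>)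
  also have "\<dots> \<le> K * exp (l\<^sup>2 * ((Min (h ` S) + c) - Min (h ` S))\<^sup>2 / 8)"
  proof (intro mult_left_mono hoeff_fin[OF S Sne _ l])
    fix x assume x: "x \<in> S"
    have "Min (h ` S) \<in> h ` S" by (rule Min_in) (use S Sne in auto)
    then obtain y where y: "y \<in> S" "h y = Min (h ` S)" by auto
    have "h x - h y \<le> c" unfolding h_def by (rule h_diff[OF S x y(1) k sw c])
    then show "Min (h ` S) \<le> h x \<and> h x \<le> Min (h ` S) + c"
      using y x S by auto
  qed (simp add: K_def)
  also have "\<dots> = exp (real (Suc k) * l\<^sup>2 * c\<^sup>2 / 8)"
    by (simp add: K_def mult_exp_exp algebra_simps add_divide_distrib)
  finally show ?case by (simp add: \<mu>_def)
qed


lemma slice_tail: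
  assumes S: "finite S" and k: "k \<le> card S" "1 \<le> k" and sw: "swapb g S k c" and c: "c > 0" and a: "a > 0"
  shows "measure_pmf.prob (pmf_of_set (ksub S k)) {T. g T - avg (ksub S k) g > a}
           \<le> exp (- (2 * a\<^sup>2 / (real k * c\<^sup>2)))"
proof -
  define A where "A = ksub S k"
  define \<mu> where "\<mu> = avg A g"
  define l where "l = 4 * a / (real k * c\<^sup>2)"
  have l: "l > 0" using a c k by (simp add: l_def)
  have fA: "finite A" "A \<noteq> {}" using S k by (auto simp: A_def ksub_ne)
  have "measure_pmf.prob (pmf_of_set A) {T. g T - \<mu> > a} = real (card (A \<inter> {T. g T - \<mu> > a})) / real (card A)"
    by (rule measure_pmf_of_set[OF fA(2,1)])
  also have "real (card (A \<inter> {T. g T - \<mu> > a})) = (\<Sum>T\<in>A. indicator {T. g T - \<mu> > a} T)"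
    using fA(1) by (simp add: indicator_def sum.If_cases)
  also have "\<dots> \<le> (\<Sum>T\<in>A. exp (- (l * a)) * exp (l * (g T - \<mu>)))"
  proof (rule sum_mono)
    fix T assume "T \<in> A"
    have "indicator {T. g T - \<mu> > a} T \<le> exp (l * (g T - \<mu> - a))"
    proof (cases "g T - \<mu> > a")
      case True
      then have "0 \<le> l * (g T - \<mu> - a)" using l by simp
      then show ?thesis using True by simp
    qed simp
    also have "\<dots> = exp (- (l * a)) * exp (l * (g T - \<mu>))"
      by (simp add: mult_exp_exp algebra_simps)
    finally show "indicator {T. g T - \<mu> > a} T \<le> exp (- (l * a)) * exp (l * (g T - \<mu>))" .
  qed
  finally have "measure_pmf.prob (pmf_of_set A) {T. g T - \<mu> > a} \<le>
      (\<Sum>T\<in>A. exp (- (l * a)) * exp (l * (g T - \<mu>))) / real (card A)"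
    by (simp add: divide_right_mono)
  also have "\<dots> = exp (- (l * a)) * avg A (\<lambda>T. exp (l * (g T - \<mu>)))"
    by (simp add: avg_def sum_distrib_left)
  also have "\<dots> \<le> exp (- (l * a)) * exp (real k * l\<^sup>2 * c\<^sup>2 / 8)"
    unfolding A_def \<mu>_def using mgf[OF S k(1) sw l] c by (intro mult_left_mono) auto
  also have "\<dots> = exp (- (2 * a\<^sup>2 / (real k * c\<^sup>2)))"
  proof -
    have "- (l * a) + real k * l\<^sup>2 * c\<^sup>2 / 8 = - (2 * a\<^sup>2 / (real k * c\<^sup>2))"
      using c k by (simp add: l_def field_simps power2_eq_square)
    then show ?thesis by (simp add: mult_exp_exp)
  qed
  finally show ?thesis by (simp add: A_def \<mu>_def)
qed

lemma slice_osc: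
  assumes S: "finite S" and k: "k \<le> card S" and sw: "swapb g S k c" and c: "c \<ge> 0" and T: "T \<in> ksub S k"
  shows "g T - avg (ksub S k) g \<le> ln (real (card (ksub S k))) + real k * c\<^sup>2 / 8"
proof -
  define A where "A = ksub S k"
  have fA: "finite A" "A \<noteq> {}" using S k by (auto simp: A_def ksub_ne)
  have "exp (1 * (g T - avg A g)) \<le> (\<Sum>U\<in>A. exp (1 * (g U - avg A g)))"
    by (rule member_le_sum) (use T fA in \<open>auto simp: A_def\<close>)
  then have "exp (g T - avg A g) \<le> (\<Sum>U\<in>A. exp (1 * (g U - avg A g)))" by simp
  also have "\<dots> = real (card A) * avg A (\<lambda>U. exp (1 * (g U - avg A g)))"
    using fA by (simp add: avg_def)
  also have "\<dots> \<le> real (card A) * exp (real k * 1\<^sup>2 * c\<^sup>2 / 8)"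
    unfolding A_def using mgf[OF S k sw zero_less_one c] by (intro mult_left_mono) auto
  finally have "exp (g T - avg A g) \<le> real (card A) * exp (real k * c\<^sup>2 / 8)" by simp
  then have "g T - avg A g \<le> ln (real (card A) * exp (real k * c\<^sup>2 / 8))"
    by (metis exp_gt_zero ln_exp ln_le_cancel_iff order_less_le_trans)
  also have "\<dots> = ln (real (card A)) + real k * c\<^sup>2 / 8"
    using fA by (simp add: ln_mult card_gt_0_iff)
  finally show ?thesis by (simp add: A_def)
qed

lemma tail_bind:
  fixes g :: "'b \<Rightarrow> real" and G :: "'a \<Rightarrow> real" and a B E :: real
  assumes H: "\<And>s. s \<in> set_pmf pd \<Longrightarrow> measure_pmf.prob (Q s) {T. g T - G s > a} \<le> B" and B: "B \<ge> 0"
  shows "measure_pmf.prob (bind_pmf pd Q) {T. g T - E > 2 * a} \<le> measure_pmf.prob pd {s. G s - E > a} + B"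
proof -
  define X where "X = {T. g T - E > 2 * a}"
  define Y where "Y = {s. G s - E > a}"
  have "ennreal (measure_pmf.prob (bind_pmf pd Q) X) = emeasure (measure_pmf (bind_pmf pd Q)) X"
    by (simp add: measure_pmf.emeasure_eq_measure)
  also have "\<dots> = (\<integral>\<^sup>+s. emeasure (measure_pmf (Q s)) X \<partial>measure_pmf pd)"
    by simp
  also have "\<dots> \<le> (\<integral>\<^sup>+s. (ennreal (indicator Y s) + ennreal B) \<partial>measure_pmf pd)"
  proof (rule nn_integral_mono_AE, rule AE_pmfI)
    fix s assume s: "s \<in> set_pmf pd"
    show "emeasure (measure_pmf (Q s)) X \<le> ennreal (indicator Y s) + ennreal B"
    proof (cases "s \<in> Y")
      case True
      have "emeasure (measure_pmf (Q s)) X \<le> 1" by (simp add: measure_pmf.emeasure_le_1)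
      also have "\<dots> \<le> ennreal (indicator Y s) + ennreal B" using True by simp
      finally show ?thesis .
    next
      case False
      have "X \<subseteq> {T. g T - G s > a}" using False by (auto simp: X_def Y_def)
      then have "emeasure (measure_pmf (Q s)) X \<le> emeasure (measure_pmf (Q s)) {T. g T - G s > a}"
        by (intro emeasure_mono) auto
      also have "\<dots> = ennreal (measure_pmf.prob (Q s) {T. g T - G s > a})"
        by (simp add: measure_pmf.emeasure_eq_measure)
      also have "\<dots> \<le> ennreal B" using H[OF s] by (simp add: ennreal_leI)
      finally show ?thesis by (simp add: add_increasing)
    qed
  qed
  also have "\<dots> = emeasure (measure_pmf pd) Y + ennreal B"
    by (simp add: nn_integral_add ennreal_indicator)
  also have "\<dots> = ennreal (measure_pmf.prob pd Y + B)"
    using B by (simp add: measure_pmf.emeasure_eq_measure ennreal_plus)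
  finally have "ennreal (measure_pmf.prob (bind_pmf pd Q) X) \<le> ennreal (measure_pmf.prob pd Y + B)" .
  then show ?thesis unfolding X_def Y_def
    using ennreal_le_iff[OF add_nonneg_nonneg[OF measure_nonneg B]] by blast
qed


lemma exp_eq:
  fixes f :: "'b \<Rightarrow> real" and A :: "'a \<Rightarrow> 'b set" and pd :: "'a pmf" and K :: real
  assumes fin: "\<And>s. s \<in> set_pmf pd \<Longrightarrow> finite (A s) \<and> A s \<noteq> {}"
    and osc: "\<And>s T. s \<in> set_pmf pd \<Longrightarrow> T \<in> A s \<Longrightarrow> \<bar>f T - avg (A s) f\<bar> \<le> K"
    and K: "K \<ge> 0"
  shows "measure_pmf.expectation (bind_pmf pd (\<lambda>s. pmf_of_set (A s))) f =
         measure_pmf.expectation pd (\<lambda>s. avg (A s) f)"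
proof -
  define M where "M = bind_pmf pd (\<lambda>s. pmf_of_set (A s))"
  have avg_nn: "0 \<le> avg B p" if "\<And>T. 0 \<le> p T" for B and p :: "'b \<Rightarrow> real"
    unfolding avg_def using that by (intro divide_nonneg_nonneg sum_nonneg) auto
  have nnl: "(\<integral>\<^sup>+T. ennreal (p T) \<partial>M) = (\<integral>\<^sup>+s. ennreal (avg (A s) p) \<partial>pd)"
    if p: "\<And>T. 0 \<le> p T" for p
    unfolding M_def nn_integral_bind_pmf
  proof (rule nn_integral_cong_AE, rule AE_pmfI)
    fix s assume s: "s \<in> set_pmf pd"
    have sp: "set_pmf (pmf_of_set (A s)) = A s" using fin[OF s] by simp
    have "(\<integral>\<^sup>+T. ennreal (p T) \<partial>measure_pmf (pmf_of_set (A s))) =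
        ennreal (measure_pmf.expectation (pmf_of_set (A s)) p)"
      by (rule nn_integral_eq_integral)
         (use fin[OF s] in \<open>simp_all add: sp p integrable_measure_pmf_finite\<close>)
    also have "\<dots> = ennreal (avg (A s) p)"
      using fin[OF s] by (simp add: integral_pmf_of_set avg_def)
    finally show "(\<integral>\<^sup>+T. ennreal (p T) \<partial>measure_pmf (pmf_of_set (A s))) = ennreal (avg (A s) p)" .
  qed
  have expl: "measure_pmf.expectation M p = measure_pmf.expectation pd (\<lambda>s. avg (A s) p)"
    if p: "\<And>T. 0 \<le> p T" for p
    using nnl[OF p] p avg_nn[OF p] by (simp add: integral_eq_nn_integral)
  show ?thesis
  proof (cases "integrable M f")
    case True
    define p where "p T = max (f T) 0" for T
    define n where "n T = max (- f T) 0" for T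
    have pn: "f T = p T - n T" for T by (simp add: p_def n_def)
    have ip: "integrable M p" unfolding p_def using True by auto
    have inn: "integrable M n" unfolding n_def using True by auto
    have p0: "0 \<le> p T" "0 \<le> n T" for T by (auto simp: p_def n_def)
    have ipd: "integrable pd (\<lambda>s. avg (A s) q)" if q: "\<And>T. 0 \<le> q T" and iq: "integrable M q" for q
    proof (rule integrableI_nonneg)
      show "AE x in pd. 0 \<le> avg (A x) q" using avg_nn[OF q] by simp
      have "(\<integral>\<^sup>+s. ennreal (avg (A s) q) \<partial>pd) = (\<integral>\<^sup>+T. ennreal (q T) \<partial>M)" using nnl[OF q] by simp
      also have "\<dots> = ennreal (measure_pmf.expectation M q)"
        by (rule nn_integral_eq_integral) (use iq q in auto)
      finally show "(\<integral>\<^sup>+s. ennreal (avg (A s) q) \<partial>pd) < \<infinity>" by simp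
    qed simp
    have "measure_pmf.expectation M f = measure_pmf.expectation M p - measure_pmf.expectation M n"
      unfolding pn by (rule Bochner_Integration.integral_diff[OF ip inn])
    also have "\<dots> = measure_pmf.expectation pd (\<lambda>s. avg (A s) p) - measure_pmf.expectation pd (\<lambda>s. avg (A s) n)"
      using expl[OF p0(1)] expl[OF p0(2)] by simp
    also have "\<dots> = measure_pmf.expectation pd (\<lambda>s. avg (A s) p - avg (A s) n)"
      by (rule Bochner_Integration.integral_diff[symmetric]) (use ipd p0 ip inn in auto)
    also have "\<dots> = measure_pmf.expectation pd (\<lambda>s. avg (A s) f)"
      unfolding pn avg_diff by simp
    finally show ?thesis unfolding M_def .
  next
    case False
    have nF: "\<not> integrable pd (\<lambda>s. avg (A s) f)"
    proof
      assume iF: "integrable pd (\<lambda>s. avg (A s) f)"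
      define G where "G s = avg (A s) (\<lambda>T. \<bar>f T\<bar>)" for s
      have iG: "integrable pd G"
      proof (rule Bochner_Integration.integrable_bound)
        show "integrable pd (\<lambda>s. \<bar>avg (A s) f\<bar> + K)" using iF by auto
        show "AE s in pd. norm (G s) \<le> norm (\<bar>avg (A s) f\<bar> + K)"
        proof (rule AE_pmfI)
          fix s assume s: "s \<in> set_pmf pd"
          have "G s \<le> avg (A s) (\<lambda>T. \<bar>avg (A s) f\<bar> + K)"
            unfolding G_def
          proof (rule avg_mono)
            fix T assume "T \<in> A s"
            then have "\<bar>f T - avg (A s) f\<bar> \<le> K" by (rule osc[OF s])
            then show "\<bar>f T\<bar> \<le> \<bar>avg (A s) f\<bar> + K" by linarith
          qed
          also have "\<dots> = \<bar>avg (A s) f\<bar> + K" using fin[OF s] by (simp add: avg_const)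
          finally show "norm (G s) \<le> norm (\<bar>avg (A s) f\<bar> + K)"
            using avg_nn[of "\<lambda>T. \<bar>f T\<bar>"] K by (simp add: G_def)
        qed
      qed simp
      have "(\<integral>\<^sup>+T. ennreal (norm (f T)) \<partial>M) = (\<integral>\<^sup>+s. ennreal (G s) \<partial>pd)"
        unfolding G_def using nnl[of "\<lambda>T. \<bar>f T\<bar>"] by simp
      also have "\<dots> = ennreal (measure_pmf.expectation pd G)"
        by (rule nn_integral_eq_integral) (use iG avg_nn[of "\<lambda>T. \<bar>f T\<bar>"] in \<open>auto simp: G_def[abs_def]\<close>)
      finally have "(\<integral>\<^sup>+T. ennreal (norm (f T)) \<partial>M) < \<infinity>" by simp
      then have "integrable M f" by (intro integrableI_bounded) auto
      with False show False by simp
    qed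
    show ?thesis using False nF unfolding M_def by (simp add: not_integrable_integral_eq)
  qed
qed


lemma face_set:
  assumes unif: "d_uniform pd d" and j: "j \<le> d"
  shows "set_pmf (face_pmf pd j) = (\<Union>s\<in>set_pmf pd. ksub s j)"
proof -
  have "set_pmf (pmf_of_set (ksub s j)) = ksub s j" if "s \<in> set_pmf pd" for s
  proof -
    have "finite s" "card s = d" using unif that by (auto simp: d_uniform_def)
    then show ?thesis using j ksub_ne[of s j] by simp
  qed
  then show ?thesis unfolding face_pmf_def ksub_def[symmetric] by simp
qed

lemma face_d:
  assumes unif: "d_uniform pd d"
  shows "set_pmf (face_pmf pd d) = set_pmf pd"
proof -
  have "ksub s d = {s}" if "s \<in> set_pmf pd" for s
  proof -
    have "finite s" "card s = d" using unif that by (auto simp: d_uniform_def)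
    then show ?thesis by (auto simp: ksub_def dest: card_subset_eq)
  qed
  then show ?thesis using face_set[OF unif order_refl] by simp
qed

context
  fixes pd :: "'v set pmf" and d k :: nat and \<nu> :: real and f' :: "'v set \<Rightarrow> real"
  assumes unif: "d_uniform pd d" and k: "1 \<le> k" "k \<le> d" and nu: "\<nu> > 0"
    and bd: "bounded_difference pd k \<nu> f'"
begin

lemma supp_fin: "s \<in> set_pmf pd \<Longrightarrow> finite s \<and> card s = d"
  using unif by (auto simp: d_uniform_def)

lemma bd_use:
  assumes T: "T \<in> set_pmf (face_pmf pd k)" and v: "v \<in> T" and U: "U \<in> set_pmf (face_pmf pd k)"
    and TU: "T - {v} \<subseteq> U"
  shows "\<bar>f' T - f' U\<bar> \<le> sqrt (\<nu> / real k)"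
proof -
  obtain s where s: "s \<in> set_pmf pd" "T \<in> ksub s k" using T face_set[OF unif k(2)] by auto
  have fT: "finite T" "T \<noteq> {}" using s supp_fin[OF s(1)] v by (auto simp: ksub_def finite_subset)
  have "U \<in> set_pmf (cond_pmf (face_pmf pd k) {t. T - {v} \<subseteq> t})"
  proof -
    have "set_pmf (face_pmf pd k) \<inter> {t. T - {v} \<subseteq> t} \<noteq> {}" using T by auto
    then show ?thesis using U TU by (simp add: set_cond_pmf)
  qed
  then have "U \<in> set_pmf (down_up_step pd k T)"
    unfolding down_up_step_def using fT v by auto
  then have "(f' T - f' U)\<^sup>2 \<le> \<nu> / real k" using bd T unfolding bounded_difference_def by blast
  then have "sqrt ((f' T - f' U)\<^sup>2) \<le> sqrt (\<nu> / real k)" by (rule real_sqrt_le_mono)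
  then show ?thesis by simp
qed

lemma swap_f:
  assumes s: "s \<in> set_pmf pd"
  shows "swapb f' s k (sqrt (\<nu> / real k))" "swapb (\<lambda>T. - f' T) s k (sqrt (\<nu> / real k))"
proof -
  have *: "\<bar>f' T - f' (insert w (T - {v}))\<bar> \<le> sqrt (\<nu> / real k)"
    if T: "T \<in> ksub s k" and v: "v \<in> T" and w: "w \<in> s - T" for T v w
  proof (rule bd_use[OF _ v])
    have fT: "finite T" using T supp_fin[OF s] by (auto simp: ksub_def finite_subset)
    have "card T > 0" using fT v card_gt_0_iff by blast
    then have "card (insert w (T - {v})) = k"
      using fT v w T by (auto simp: ksub_def card_insert_if card_Diff_singleton)
    then have "insert w (T - {v}) \<in> ksub s k" using T w v by (auto simp: ksub_def)
    then show "insert w (T - {v}) \<in> set_pmf (face_pmf pd k)" using s face_set[OF unif k(2)] by auto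
    show "T \<in> set_pmf (face_pmf pd k)" using s T face_set[OF unif k(2)] by auto
  qed auto
  show "swapb f' s k (sqrt (\<nu> / real k))" unfolding swapb_def using * by blast
  show "swapb (\<lambda>T. - f' T) s k (sqrt (\<nu> / real k))" unfolding swapb_def using * by fastforce
qed


lemma pair:
  assumes s: "s \<in> set_pmf pd" and s': "s' \<in> set_pmf pd" and v: "v \<in> s" and w: "w \<notin> s"
    and ss': "s' = insert w (s - {v})"
  shows "\<bar>avg (ksub s k) f' - avg (ksub s' k) f'\<bar> \<le> real k / real d * sqrt (\<nu> / real k)"
proof -
  define c where "c = sqrt (\<nu> / real k)"
  have c0: "c \<ge> 0" using nu by (simp add: c_def)
  have fs: "finite s" "card s = d" using supp_fin[OF s] by auto
  have fs': "finite s'" "card s' = d" using supp_fin[OF s'] by auto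
  define N where "N = d choose k"
  have cN: "card (ksub s k) = N" "card (ksub s' k) = N" using fs fs' by (simp_all add: ksub_card N_def)
  have N0: "N > 0" using k by (simp add: N_def)
  define A where "A = {T \<in> ksub s k. v \<in> T}"
  define B where "B = {T \<in> ksub s k. v \<notin> T}"
  define A' where "A' = {T \<in> ksub s' k. w \<in> T}"
  define B' where "B' = {T \<in> ksub s' k. w \<notin> T}"
  have vw: "v \<noteq> w" using v w by auto
  have BB: "B' = B" unfolding B_def B'_def ksub_def ss' using v w by auto
  have fin: "finite A" "finite B" "finite A'" "finite B'"
    using fs fs' by (auto simp: A_def B_def A'_def B'_def)
  have s1: "sum f' (ksub s k) = sum f' A + sum f' B"
  proof -
    have "ksub s k = A \<union> B" "A \<inter> B = {}" by (auto simp: A_def B_def)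
    then show ?thesis using fin by (simp add: sum.union_disjoint)
  qed
  have s2: "sum f' (ksub s' k) = sum f' A' + sum f' B'"
  proof -
    have "ksub s' k = A' \<union> B'" "A' \<inter> B' = {}" by (auto simp: A'_def B'_def)
    then show ?thesis using fin by (simp add: sum.union_disjoint)
  qed
  have jA: "insert w (T - {v}) \<in> A'" if T: "T \<in> A" for T
  proof -
    have fT: "finite T" "T \<subseteq> s" "card T = k" "v \<in> T" using T fs by (auto simp: A_def ksub_def finite_subset)
    have wT: "w \<notin> T" using fT w by auto
    have "card T > 0" using fT card_gt_0_iff by blast
    then have "card (insert w (T - {v})) = k" using fT wT by (simp add: card_Diff_singleton)
    then show "insert w (T - {v}) \<in> A'" using fT unfolding A'_def ksub_def ss' by auto
  qed
  have s3: "(\<Sum>T\<in>A. f' (insert w (T - {v}))) = sum f' A'"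
  proof (rule sum.reindex_bij_witness[where j = "\<lambda>T. insert w (T - {v})" and i = "\<lambda>U. insert v (U - {w})"])
    fix T assume T: "T \<in> A"
    have fT: "finite T" "T \<subseteq> s" "card T = k" "v \<in> T" using T fs by (auto simp: A_def ksub_def finite_subset)
    have wT: "w \<notin> T" using fT w by auto
    show "insert v (insert w (T - {v}) - {w}) = T" using fT wT by auto
    have "card T > 0" using fT card_gt_0_iff by blast
    then have "card (insert w (T - {v})) = k" using fT wT by (simp add: card_Diff_singleton)
    then show "insert w (T - {v}) \<in> A'" using fT unfolding A'_def ksub_def ss' by auto
  next
    fix U assume U: "U \<in> A'"
    have fU: "finite U" "U \<subseteq> s'" "card U = k" "w \<in> U" using U fs' by (auto simp: A'_def ksub_def finite_subset)
    have vU: "v \<notin> U" using fU vw ss' by auto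
    show "insert w (insert v (U - {w}) - {v}) = U" using fU vU by auto
    have "card U > 0" using fU card_gt_0_iff by blast
    then have "card (insert v (U - {w})) = k" using fU vU by (simp add: card_Diff_singleton)
    then show "insert v (U - {w}) \<in> A" using fU v unfolding A_def ksub_def ss' by auto
  qed simp
  have cA: "card A = (d - 1) choose (k - 1)"
  proof -
    have "A = insert v ` ksub (s - {v}) (k - 1)"
    proof
      show "A \<subseteq> insert v ` ksub (s - {v}) (k - 1)"
      proof
        fix T assume T: "T \<in> A"
        have fT: "finite T" "T \<subseteq> s" "card T = k" "v \<in> T" using T fs by (auto simp: A_def ksub_def finite_subset)
        then have "T - {v} \<in> ksub (s - {v}) (k - 1)" by (auto simp: ksub_def card_Diff_singleton)
        moreover have "T = insert v (T - {v})" using fT by auto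
        ultimately show "T \<in> insert v ` ksub (s - {v}) (k - 1)" by blast
      qed
    next
      show "insert v ` ksub (s - {v}) (k - 1) \<subseteq> A"
      proof
        fix T assume "T \<in> insert v ` ksub (s - {v}) (k - 1)"
        then obtain U where U: "U \<in> ksub (s - {v}) (k - 1)" "T = insert v U" by auto
        have "finite U" "v \<notin> U" "U \<subseteq> s" "card U = k - 1" using U fs by (auto simp: ksub_def finite_subset)
        then show "T \<in> A" using U k v by (auto simp: A_def ksub_def)
      qed
    qed
    moreover have "inj_on (insert v) (ksub (s - {v}) (k - 1))"
      by (rule inj_onI) (auto simp: ksub_def insert_ident)
    ultimately have "card A = card (ksub (s - {v}) (k - 1))" by (simp add: card_image)
    also have "\<dots> = (d - 1) choose (k - 1)" using fs v by (simp add: ksub_card)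
    finally show ?thesis .
  qed
  have ratio: "real ((d - 1) choose (k - 1)) / real N = real k / real d"
  proof -
    have "Suc (d - 1) * ((d - 1) choose (k - 1)) = (Suc (d - 1) choose Suc (k - 1)) * Suc (k - 1)"
      by (rule Suc_times_binomial_eq)
    moreover have "Suc (d - 1) = d" "Suc (k - 1) = k" using k by auto
    ultimately have "real d * real ((d - 1) choose (k - 1)) = real N * real k"
      unfolding N_def by (metis of_nat_mult)
    then show ?thesis using N0 k by (simp add: field_simps)
  qed
  have trm: "\<bar>f' T - f' (insert w (T - {v}))\<bar> \<le> c" if T: "T \<in> A" for T
  proof (rule bd_use[of T v, folded c_def])
    have fT: "finite T" "T \<subseteq> s" "card T = k" "v \<in> T" using T fs by (auto simp: A_def ksub_def finite_subset)
    show "T \<in> set_pmf (face_pmf pd k)" using T s face_set[OF unif k(2)] by (auto simp: A_def)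
    have "insert w (T - {v}) \<in> A'" using jA[OF T] .
    then show "insert w (T - {v}) \<in> set_pmf (face_pmf pd k)" using s' face_set[OF unif k(2)] by (auto simp: A'_def)
    show "v \<in> T" using fT by simp
  qed auto
  have "avg (ksub s k) f' - avg (ksub s' k) f' = (\<Sum>T\<in>A. f' T - f' (insert w (T - {v}))) / real N"
    unfolding avg_def cN s1 s2 BB s3[symmetric] by (simp add: sum_subtractf diff_divide_distrib add_divide_distrib)
  then have "\<bar>avg (ksub s k) f' - avg (ksub s' k) f'\<bar> = \<bar>\<Sum>T\<in>A. f' T - f' (insert w (T - {v}))\<bar> / real N"
    by simp
  also have "\<dots> \<le> (real (card A) * c) / real N"
  proof (rule divide_right_mono)
    have "\<bar>\<Sum>T\<in>A. f' T - f' (insert w (T - {v}))\<bar> \<le> (\<Sum>T\<in>A. \<bar>f' T - f' (insert w (T - {v}))\<bar>)"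
      by (rule sum_abs)
    also have "\<dots> \<le> real (card A) * c" using sum_bounded_above[of A _ c] trm by simp
    finally show "\<bar>\<Sum>T\<in>A. f' T - f' (insert w (T - {v}))\<bar> \<le> real (card A) * c" .
  qed simp
  also have "\<dots> = (real (card A) / real N) * c" by simp
  also have "\<dots> = real k / real d * c" by (simp only: cA ratio)
  finally show ?thesis by (simp add: c_def)
qed


lemma lip: "lipschitz_cx pd d (real k / real d * \<nu>) (\<lambda>s. avg (ksub s k) f')"
  unfolding lipschitz_cx_def
proof (intro ballI allI impI)
  fix x and z :: "'v \<Rightarrow> 'v"
  assume x: "x \<in> set_pmf (face_pmf pd d)" and hz: "\<forall>v\<in>x. z v \<in> set_pmf (link_vertex_pmf pd (x - {v}))"
  define F where "F (s :: 'v set) = avg (ksub s k) f'" for s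
  define b where "b = real k / real d * sqrt (\<nu> / real k)"
  have b0: "b \<ge> 0" using nu by (simp add: b_def)
  have xs: "x \<in> set_pmf pd" using x face_d[OF unif] by simp
  have fx: "finite x" "card x = d" using supp_fin[OF xs] by auto
  have each: "\<bar>F x - F (insert (z v) (x - {v}))\<bar> \<le> b" if v: "v \<in> x" for v
  proof -
    have zv: "z v \<in> set_pmf (link_vertex_pmf pd (x - {v}))" using hz v by blast
    have "card x > 0" using fx v card_gt_0_iff by blast
    then have cv: "Suc (card (x - {v})) = d" using fx v by (simp add: card_Diff_singleton)
    have ne: "set_pmf (face_pmf pd d) \<inter> {t. x - {v} \<subseteq> t} \<noteq> {}" using x by auto
    obtain t where t: "t \<in> set_pmf (face_pmf pd d)" "x - {v} \<subseteq> t" "z v = the_elem (t - (x - {v}))"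
      using zv ne unfolding link_vertex_pmf_def cv by (auto simp: set_cond_pmf)
    have ts: "t \<in> set_pmf pd" using t(1) face_d[OF unif] by simp
    have ft: "finite t" "card t = d" using supp_fin[OF ts] by auto
    have "card (t - (x - {v})) = card t - card (x - {v})"
      using t(2) ft fx by (intro card_Diff_subset) auto
    also have "\<dots> = 1" using ft cv by simp
    finally obtain w where w: "t - (x - {v}) = {w}" using card_1_singletonE by metis
    then have zw: "z v = w" using t by simp
    have teq: "t = insert w (x - {v})" using w t(2) by blast
    show ?thesis
    proof (cases "w \<in> x")
      case True
      then have "w = v" using w by blast
      then have "insert (z v) (x - {v}) = x" using zw v by auto
      then show ?thesis using b0 by simp
    next
      case False
      show ?thesis using pair[OF xs ts v False teq] zw teq by (simp add: F_def b_def)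
    qed
  qed
  have "(\<Sum>v\<in>x. (max (F x - F (insert (z v) (x - {v}))) 0)\<^sup>2) \<le> (\<Sum>v\<in>x. b\<^sup>2)"
  proof (rule sum_mono)
    fix v assume "v \<in> x"
    then have "\<bar>max (F x - F (insert (z v) (x - {v}))) 0\<bar> \<le> \<bar>b\<bar>" using each b0 by fastforce
    then show "(max (F x - F (insert (z v) (x - {v}))) 0)\<^sup>2 \<le> b\<^sup>2" using abs_le_square_iff by blast
  qed
  also have "\<dots> = real d * b\<^sup>2" using fx by simp
  also have "\<dots> = real k / real d * \<nu>"
  proof -
    have "(sqrt (\<nu> / real k))\<^sup>2 = \<nu> / real k" using nu by simp
    then show ?thesis using k by (simp add: b_def power_mult_distrib power_divide field_simps power2_eq_square)
  qed
  finally show "(\<Sum>v\<in>x. (max (avg (ksub x k) f' - avg (ksub (insert (z v) (x - {v})) k) f') 0)\<^sup>2)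
      \<le> real k / real d * \<nu>" by (simp add: F_def)
qed

end


lemma avg_neg: "avg A (\<lambda>x. - f x) = - avg A f"
  by (simp add: avg_def sum_negf)

theorem mainTheorem11:
  fixes pd :: "'v set pmf" and d k :: nat and up low :: "real \<Rightarrow> real \<Rightarrow> real"
    and \<nu> :: real and f' :: "'v set \<Rightarrow> real"
  assumes unif: "d_uniform pd d"
    and k: "1 \<le> k" "k \<le> d"
    and up: "\<And>\<mu> f t. \<mu> > 0 \<Longrightarrow> lipschitz_cx pd d \<mu> f \<Longrightarrow> t > 0 \<Longrightarrow>
        measure_pmf.prob pd {x. f x - measure_pmf.expectation pd f > t} \<le> up t \<mu>"
    and low: "\<And>\<mu> f t. \<mu> > 0 \<Longrightarrow> lipschitz_cx pd d \<mu> f \<Longrightarrow> t > 0 \<Longrightarrow>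
        measure_pmf.prob pd {x. f x - measure_pmf.expectation pd f < - t} \<le> low t \<mu>"
    and nu: "\<nu> > 0"
    and bd: "bounded_difference pd k \<nu> f'"
  shows "\<forall>t > 0.
      measure_pmf.prob (face_pmf pd k)
        {x. f' x - measure_pmf.expectation (face_pmf pd k) f' > t}
        \<le> up (t / 2) (real k / real d * \<nu>) + exp (- (t\<^sup>2 / (4 * \<nu>)))
    \<and> measure_pmf.prob (face_pmf pd k)
        {x. f' x - measure_pmf.expectation (face_pmf pd k) f' < - t}
        \<le> low (t / 2) (real k / real d * \<nu>) + exp (- (t\<^sup>2 / (4 * \<nu>)))"
proof (intro allI impI)
  fix t :: real assume t: "t > 0"
  define F where "F (s :: 'v set) = avg (ksub s k) f'" for s
  define c where "c = sqrt (\<nu> / real k)"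
  define \<mu> where "\<mu> = real k / real d * \<nu>"
  define Q where "Q (s :: 'v set) = pmf_of_set (ksub s k)" for s
  define E where "E = measure_pmf.expectation (face_pmf pd k) f'"
  define B where "B = exp (- (t\<^sup>2 / (4 * \<nu>)))"
  note sf = supp_fin[OF unif k nu bd]
  have c0: "c > 0" using nu k by (simp add: c_def)
  have cc: "c\<^sup>2 = \<nu> / real k" using nu by (simp add: c_def)
  have \<mu>0: "\<mu> > 0" using nu k by (simp add: \<mu>_def)
  have face: "face_pmf pd k = bind_pmf pd Q" unfolding face_pmf_def Q_def ksub_def by simp
  have finQ: "finite (ksub s k) \<and> ksub s k \<noteq> {}" if s: "s \<in> set_pmf pd" for s
    using sf[OF s] k ksub_ne[of s k] by auto
  have kc: "k \<le> card s" if s: "s \<in> set_pmf pd" for s using sf[OF s] k by auto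
  define K where "K = ln (real (d choose k)) + real k * c\<^sup>2 / 8"
  have K0: "K \<ge> 0"
  proof -
    have "real (d choose k) \<ge> 1" using k by (simp add: Suc_leI)
    then show ?thesis unfolding K_def by (simp add: ln_ge_zero)
  qed
  have osc: "\<bar>f' T - avg (ksub s k) f'\<bar> \<le> K" if s: "s \<in> set_pmf pd" and T: "T \<in> ksub s k" for s T
  proof -
    have cardk: "card (ksub s k) = d choose k" using sf[OF s] by (simp add: ksub_card)
    have "f' T - avg (ksub s k) f' \<le> K"
      using slice_osc[OF _ kc[OF s] swap_f(1)[OF unif k nu bd s, folded c_def] _ T] sf[OF s] c0
      by (simp add: K_def cardk)
    moreover have "(- f' T) - avg (ksub s k) (\<lambda>T. - f' T) \<le> K"
      using slice_osc[OF _ kc[OF s] swap_f(2)[OF unif k nu bd s, folded c_def] _ T] sf[OF s] c0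
      by (simp add: K_def cardk)
    ultimately show ?thesis by (simp add: avg_neg)
  qed
  have EF: "E = measure_pmf.expectation pd F"
    unfolding E_def face Q_def F_def[abs_def] by (rule exp_eq[OF finQ osc K0])
  have lipF: "lipschitz_cx pd d \<mu> F"
    unfolding \<mu>_def F_def[abs_def] by (rule lip[OF unif k nu bd])
  have t2: "t / 2 > 0" using t by simp
  have expb: "exp (- (2 * (t / 2)\<^sup>2 / (real k * c\<^sup>2))) \<le> B"
  proof -
    have "real k * c\<^sup>2 = \<nu>" using cc k by simp
    then have "- (2 * (t / 2)\<^sup>2 / (real k * c\<^sup>2)) \<le> - (t\<^sup>2 / (4 * \<nu>))"
      using nu by (simp add: field_simps power2_eq_square)
    then show ?thesis unfolding B_def by simp
  qed
  have B0: "B \<ge> 0" by (simp add: B_def)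
  have upper: "measure_pmf.prob (face_pmf pd k) {x. f' x - E > t} \<le> up (t / 2) \<mu> + B"
  proof -
    have H: "measure_pmf.prob (Q s) {T. f' T - F s > t / 2} \<le> B" if s: "s \<in> set_pmf pd" for s
      using slice_tail[OF _ kc[OF s] k(1) swap_f(1)[OF unif k nu bd s, folded c_def] c0 t2] sf[OF s] expb
      unfolding Q_def F_def by linarith
    have "measure_pmf.prob (face_pmf pd k) {x. f' x - E > 2 * (t / 2)} \<le> measure_pmf.prob pd {s. F s - E > t / 2} + B"
      unfolding face by (rule tail_bind[OF H B0])
    also have "measure_pmf.prob pd {s. F s - E > t / 2} \<le> up (t / 2) \<mu>"
      unfolding EF by (rule up[OF \<mu>0 lipF t2])
    finally show ?thesis by simp
  qed
  have lower: "measure_pmf.prob (face_pmf pd k) {x. f' x - E < - t} \<le> low (t / 2) \<mu> + B"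
  proof -
    have H: "measure_pmf.prob (Q s) {T. - f' T - (- F s) > t / 2} \<le> B" if s: "s \<in> set_pmf pd" for s
      using slice_tail[OF _ kc[OF s] k(1) swap_f(2)[OF unif k nu bd s, folded c_def] c0 t2] sf[OF s] expb
      unfolding Q_def F_def avg_neg by linarith
    have "measure_pmf.prob (face_pmf pd k) {x. - f' x - (- E) > 2 * (t / 2)} \<le>
        measure_pmf.prob pd {s. - F s - (- E) > t / 2} + B"
      unfolding face by (rule tail_bind[OF H B0])
    also have "{x. - f' x - (- E) > 2 * (t / 2)} = {x. f' x - E < - t}" by auto
    also have "{s. - F s - (- E) > t / 2} = {s. F s - measure_pmf.expectation pd F < - (t / 2)}"
      unfolding EF by auto
    also have "measure_pmf.prob pd {s. F s - measure_pmf.expectation pd F < - (t / 2)} \<le> low (t / 2) \<mu>"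
      by (rule low[OF \<mu>0 lipF t2])
    finally show ?thesis by simp
  qed
  show "measure_pmf.prob (face_pmf pd k)
        {x. f' x - measure_pmf.expectation (face_pmf pd k) f' > t}
        \<le> up (t / 2) (real k / real d * \<nu>) + exp (- (t\<^sup>2 / (4 * \<nu>)))
    \<and> measure_pmf.prob (face_pmf pd k)
        {x. f' x - measure_pmf.expectation (face_pmf pd k) f' < - t}
        \<le> low (t / 2) (real k / real d * \<nu>) + exp (- (t\<^sup>2 / (4 * \<nu>)))"
    using upper lower unfolding E_def \<mu>_def B_def by simp
qed

end
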